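(* Let $P$ be a well-ordered phaser and suppose $P\to Q$. Then $P\mathbin{||}Q$, i.e. both $P\unrhd Q$ and $Q\unrhd P$.
   Context: A view is a record $v=(\mathrm{sp}(v),\mathrm{wp}(v),\mathrm{mode}(v))$ with $\mathrm{sp}(v),\mathrm{wp}(v)\in\mathbb{N}$ and $\mathrm{mode}(v)\in\{\mathtt{SW},\mathtt{SO},\mathtt{WO}\}$. For a view or mode, $\mathrm{CanSignal}$ means the mode is $\mathtt{SW}$ or $\mathtt{SO}$, and $\mathrm{CanWait}$ means the mode is $\mathtt{SW}$ or $\mathtt{WO}$. A phaser $P$ is a finite partial map from task identifiers to views. For views, $v_1\unrhd v_2$ iff $\mathrm{mode}(v_1)=\mathtt{WO}$ or $\mathrm{sp}(v_1)\ge\mathrm{wp}(v_2)$ or $\mathrm{mode}(v_2)=\mathtt{SO}$. For phasers, $P\unrhd Q$ iff $P(t)\unrhd Q(t')$ for all $t\in\mathrm{dom}\,P$, $t'\in\mathrm{dom}\,Q$; $P\mathbin{||}Q$ iff $P\unrhd Q$ and $Q\unrhd P$. $P$ is well-ordered iff $P\unrhd P$. Reduction $P\to_t^{o}Q$ is defined by four rules. Signal: if $P(t)=v$, $\mathrm{CanSignal}(v)$, and ($\mathrm{mode}(v)=\mathtt{SW}\Rightarrow\mathrm{wp}(v)=\mathrm{sp}(v)$), then $Q=P[t\mapsto v']$ with $v'$ equal to $v$ except $\mathrm{sp}(v')=\mathrm{sp}(v)+1$. Wait: if $P(t)=v$, $\mathrm{CanWait}(v)$, ($\mathrm{mode}(v)=\mathtt{SW}\Rightarrow\mathrm{wp}(v)+1=\mathrm{sp}(v)$),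 and $\mathrm{Sync}(P,t)$, meaning that every $t'\in\mathrm{dom}\,P$ with $\mathrm{CanSignal}(P(t'))$ has $\mathrm{sp}(P(t'))>\mathrm{wp}(v)$, then $Q=P[t\mapsto v']$ with $v'$ equal to $v$ except $\mathrm{wp}(v')=\mathrm{wp}(v)+1$. Register$(t',r)$: if $t'\notin\mathrm{dom}\,P$, $P(t)=v$, ($\mathrm{CanWait}(r)\Rightarrow\mathrm{CanWait}(v)$) and ($\mathrm{CanSignal}(r)\Rightarrow\mathrm{CanSignal}(v)$), then $Q=P[t'\mapsto(\mathrm{sp}(v),\mathrm{wp}(v),r)]$. Drop: if $t\in\mathrm{dom}\,P$, then $Q$ is $P$ with $t$ removed. $P\to Q$ means $P\to_t^{o}Q$ for some $t,o$. *)

theory Defs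
  imports Main
begin

datatype mode = SW | SO | WO

record view =
  sp :: nat
  wp :: nat
  mode :: mode

definition can_signal_m :: "mode \<Rightarrow> bool" where
  "can_signal_m m \<longleftrightarrow> m = SW \<or> m = SO"
definition can_wait_m :: "mode \<Rightarrow> bool" where
  "can_wait_m m \<longleftrightarrow> m = SW \<or> m = WO"

abbreviation can_signal :: "view \<Rightarrow> bool" where
  "can_signal v \<equiv> can_signal_m (mode v)"
abbreviation can_wait :: "view \<Rightarrow> bool" where
  "can_wait v \<equiv> can_wait_m (mode v)"

type_synonym 'tid phaser = "'tid \<rightharpoonup> view"

definition view_ge :: "view \<Rightarrow> view \<Rightarrow> bool" where
  "view_ge v1 v2 \<longleftrightarrow> mode v1 = WO \<or> sp v1 \<ge> wp v2 \<or> mode v2 = SO"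

definition ph_ge :: "'tid phaser \<Rightarrow> 'tid phaser \<Rightarrow> bool" where
  "ph_ge P Q \<longleftrightarrow> (\<forall>t \<in> dom P. \<forall>t' \<in> dom Q. view_ge (the (P t)) (the (Q t')))"

definition ph_par :: "'tid phaser \<Rightarrow> 'tid phaser \<Rightarrow> bool" where
  "ph_par P Q \<longleftrightarrow> ph_ge P Q \<and> ph_ge Q P"

definition well_ordered :: "'tid phaser \<Rightarrow> bool" where
  "well_ordered P \<longleftrightarrow> ph_ge P P"

definition sync :: "'tid phaser \<Rightarrow> 'tid \<Rightarrow> bool" where
  "sync P t \<longleftrightarrow> (\<forall>t' \<in> dom P. can_signal (the (P t')) \<longrightarrow>
                     sp (the (P t')) > wp (the (P t)))"

datatype 'tid op = Signal | Wait | Register 'tid mode | Drop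

inductive reduces :: "'tid phaser \<Rightarrow> 'tid \<Rightarrow> 'tid op \<Rightarrow> 'tid phaser \<Rightarrow> bool" where
  signal: "\<lbrakk> P t = Some v; can_signal v; mode v = SW \<longrightarrow> wp v = sp v \<rbrakk>
     \<Longrightarrow> reduces P t Signal (P(t \<mapsto> v\<lparr>sp := sp v + 1\<rparr>))"
| wait: "\<lbrakk> P t = Some v; can_wait v; mode v = SW \<longrightarrow> wp v + 1 = sp v; sync P t \<rbrakk>
     \<Longrightarrow> reduces P t Wait (P(t \<mapsto> v\<lparr>wp := wp v + 1\<rparr>))"
| register: "\<lbrakk> t' \<notin> dom P; P t = Some v; can_wait_m r \<longrightarrow> can_wait v;
               can_signal_m r \<longrightarrow> can_signal v \<rbrakk>
     \<Longrightarrow> reduces P t (Register t' r) (P(t' \<mapsto> \<lparr>sp = sp v, wp = wp v, mode = r\<rparr>))"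
| drop: "t \<in> dom P \<Longrightarrow> reduces P t Drop (P(t := None))"

definition step :: "'tid phaser \<Rightarrow> 'tid phaser \<Rightarrow> bool" where
  "step P Q \<longleftrightarrow> (\<exists>t a. reduces P t a Q)"

end

theory Submission
  imports Defs
begin

theorem lemma3:
  fixes P Q :: "'tid phaser"
  assumes "finite (dom P)"
    and "well_ordered P"
    and "step P Q"
  shows "ph_par P Q"
proof -
  have wo: "\<And>x y vx vy. P x = Some vx \<Longrightarrow> P y = Some vy \<Longrightarrow> view_ge vx vy"
    using assms(2) unfolding well_ordered_def ph_ge_def by force
  from assms(3) obtain t a where r: "reduces P t a Q" unfolding step_def by blast
  from r show ?thesis
  proof cases
    case (signal v)
    show ?thesis unfolding ph_par_def ph_ge_def
    proof (intro conjI ballI)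
      fix x y assume "x \<in> dom P" "y \<in> dom Q"
      then obtain vx vy where "P x = Some vx" "P y = Some vy" using signal by auto
      then show "view_ge (the (P x)) (the (Q y))" using wo[of x vx y vy] wo[of x vx t v] signal
        by (auto simp: view_ge_def)
    next
      fix x y assume "x \<in> dom Q" "y \<in> dom P"
      then obtain vx vy where "P x = Some vx" "P y = Some vy" using signal by auto
      then show "view_ge (the (Q x)) (the (P y))" using wo[of x vx y vy] wo[of t v y vy] signal
        by (auto simp: view_ge_def)
    qed
  next
    case (wait v)
    show ?thesis unfolding ph_par_def ph_ge_def
    proof (intro conjI ballI)
      fix x y assume "x \<in> dom P" "y \<in> dom Q"
      then obtain vx vy where a: "P x = Some vx" "P y = Some vy" using wait by auto
      have s: "can_signal vx \<Longrightarrow> sp vx > wp v" using wait(5) a wait unfolding sync_def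
        by (metis domI option.sel)
      show "view_ge (the (P x)) (the (Q y))" using a wo[of x vx y vy] wait s
        by (cases "mode vx"; cases "mode v"; cases "x = t";
            auto simp: view_ge_def can_signal_m_def can_wait_m_def)
    next
      fix x y assume "x \<in> dom Q" "y \<in> dom P"
      then obtain vx vy where "P x = Some vx" "P y = Some vy" using wait by auto
      then show "view_ge (the (Q x)) (the (P y))" using wo[of x vx y vy] wo[of t v y vy] wait
        by (auto simp: view_ge_def)
    qed
  next
    case (register tn v r)
    show ?thesis unfolding ph_par_def ph_ge_def
    proof (intro conjI ballI)
      fix x y assume "x \<in> dom P" "y \<in> dom Q"
      then obtain vx where a: "P x = Some vx" by auto
      show "view_ge (the (P x)) (the (Q y))"
      proof (cases "y = tn")
        case True
        then show ?thesis using a wo[of x vx t v] register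
          by (cases r; cases "mode v"; auto simp: view_ge_def can_signal_m_def can_wait_m_def)
      next
        case False
        then obtain vy where "P y = Some vy" using register \<open>y \<in> dom Q\<close> by auto
        then show ?thesis using a wo[of x vx y vy] register False by auto
      qed
    next
      fix x y assume "x \<in> dom Q" "y \<in> dom P"
      then obtain vy where a: "P y = Some vy" by auto
      show "view_ge (the (Q x)) (the (P y))"
      proof (cases "x = tn")
        case True
        then show ?thesis using a wo[of t v y vy] register
          by (cases r; cases "mode v"; auto simp: view_ge_def can_signal_m_def can_wait_m_def)
      next
        case False
        then obtain vx where "P x = Some vx" using register \<open>x \<in> dom Q\<close> by auto
        then show ?thesis using a wo[of x vx y vy] register False by auto
      qed
    qed
  next
    case drop
    then show ?thesis using wo unfolding ph_par_def ph_ge_def by auto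
  qed
qed

end
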